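(* For all integers $n\ge0$ and odd $k\ge3$, $$\delta_kH^{\mathfrak a}(1^n)=-\sum_{i=\max(1,k-n)}^{k-1}\frac1k\binom ki\,T^i\,H^{\mathfrak a}(1^{n-k+i}).$$
   Context: $\mathcal M^{(1)}=\mathbb Q[\zeta^{\mathfrak a}(3),\zeta^{\mathfrak a}(5),\dots]$ is the free polynomial subalgebra of depth-one motivic MZVs in $\mathcal A=\mathcal H/\zeta^{\mathfrak m}(2)\mathcal H$; $\zeta^{\mathfrak a}(k)=0$ for even $k$. For odd $k\ge3$, $\delta_k$ is the continuous $\mathbb Q((T))$-linear derivation $\partial/\partial\zeta^{\mathfrak a}(k)$ of $\mathcal M^{(1)}((T))$. Motivic power sums: $H^{\mathfrak a}(n)=(-1)^n\sum_{j\ge1}\binom{n+j-1}{n-1}\zeta^{\mathfrak a}(n+j)T^j$. Motivic elementary symmetric sums: $H^{\mathfrak a}(1^0)=1$, $H^{\mathfrak a}(1^n)=\frac1n\sum_{i=1}^n(-1)^{i-1}H^{\mathfrak a}(i)H^{\mathfrak a}(1^{n-i})$ for $n\ge1$. *)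

theory Defs
  imports "HOL-Library.Poly_Mapping" "HOL-Computational_Algebra.Formal_Power_Series"
begin

text \<open>The depth-one algebra M1 = Q[zeta(3), zeta(5), ...] is
  realised as the subalgebra generated by the variables X_k with k odd, k >= 3,
  via zeta(k) = X_k.\<close>
type_synonym qpoly = "(nat \<Rightarrow>\<^sub>0 nat) \<Rightarrow>\<^sub>0 rat"

definition qconst :: "rat \<Rightarrow> qpoly" where
  "qconst r = Poly_Mapping.single 0 r"

definition qvar :: "nat \<Rightarrow> qpoly" where
  "qvar v = Poly_Mapping.single (Poly_Mapping.single v 1) 1"

text \<open>Motivic depth-one zeta values: zeta^a(k) = 0 for even k (and k < 3 does not occur).\<close>
definition zeta_a :: "nat \<Rightarrow> qpoly" where
  "zeta_a k = (if odd k \<and> k \<ge> 3 then qvar k else 0)"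

definition pdiff :: "nat \<Rightarrow> qpoly \<Rightarrow> qpoly" where
  "pdiff v p = (\<Sum>(m::nat \<Rightarrow>\<^sub>0 nat)\<in>Poly_Mapping.keys p. Poly_Mapping.single (m - Poly_Mapping.single v 1)
                   (of_nat (Poly_Mapping.lookup m v) * (Poly_Mapping.lookup p m)))"

definition delta :: "nat \<Rightarrow> qpoly fps \<Rightarrow> qpoly fps" where
  "delta k f = Abs_fps (\<lambda>j. pdiff k (fps_nth f j))"

definition Hpow :: "nat \<Rightarrow> qpoly fps" where
  "Hpow n = Abs_fps (\<lambda>j. if j = 0 then 0
      else (-1) ^ n * of_nat ((n + j - 1) choose (n - 1)) * zeta_a (n + j))"

function Helem :: "nat \<Rightarrow> qpoly fps" where
  "Helem n = (if n = 0 then 1 else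
      fps_const (qconst (1 / of_nat n)) *
        (\<Sum>i = 1..n. (-1) ^ (i - 1) * Hpow i * Helem (n - i)))"
  by auto
termination by (relation "measure id") auto

end

theory Submission imports Defs begin

lemma pdiff_superset:
  assumes "finite S" "Poly_Mapping.keys p \<subseteq> S"
  shows "pdiff v p = (\<Sum>m\<in>S. Poly_Mapping.single (m - Poly_Mapping.single v 1) (of_nat (Poly_Mapping.lookup m v) * Poly_Mapping.lookup p m))"
  unfolding pdiff_def using assms
  by (intro sum.mono_neutral_left) (auto simp: in_keys_iff)

lemma pdiff_add: "pdiff v (p + q) = pdiff v p + pdiff v q"
proof -
  let ?S = "Poly_Mapping.keys p \<union> Poly_Mapping.keys q"
  have f: "finite ?S" by simp
  show ?thesis
    using keys_add[of p q]
    by (simp add: pdiff_superset[OF f] lookup_add distrib_left single_add sum.distrib)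
qed

lemma pdiff_zero[simp]: "pdiff v 0 = 0" by (simp add: pdiff_def)

lemma pdiff_sum: "pdiff v (sum f A) = (\<Sum>a\<in>A. pdiff v (f a))"
  by (induction A rule: infinite_finite_induct) (auto simp: pdiff_add)

lemma pdiff_single: "pdiff v (Poly_Mapping.single m c) = Poly_Mapping.single (m - Poly_Mapping.single v 1) (of_nat (Poly_Mapping.lookup m v) * c)"
  by (cases "c = 0") (auto simp: pdiff_def)

lemma poly_expand: "p = (\<Sum>m\<in>Poly_Mapping.keys p. Poly_Mapping.single m (Poly_Mapping.lookup p m))"
  by (rule poly_mapping_eqI) (auto simp: lookup_sum lookup_single when_def in_keys_iff)

lemma pdiff_mono_mult:
  "pdiff v (Poly_Mapping.single a (x::rat) * Poly_Mapping.single b y) =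
   pdiff v (Poly_Mapping.single a x) * Poly_Mapping.single b y + Poly_Mapping.single a x * pdiff v (Poly_Mapping.single b y)"
proof -
  let ?e = "Poly_Mapping.single v (1::nat)"
  have 1: "Poly_Mapping.single (a - ?e + b) (of_nat (Poly_Mapping.lookup a v) * x * y)
        = Poly_Mapping.single (a + b - ?e) (of_nat (Poly_Mapping.lookup a v) * x * y)"
  proof (cases "Poly_Mapping.lookup a v = 0")
    case False
    have "a - ?e + b = a + b - ?e"
      using False by (intro poly_mapping_eqI) (auto simp: lookup_minus lookup_add lookup_single when_def)
    then show ?thesis by simp
  qed simp
  have 2: "Poly_Mapping.single (a + (b - ?e)) (x * (of_nat (Poly_Mapping.lookup b v) * y))
        = Poly_Mapping.single (a + b - ?e) (of_nat (Poly_Mapping.lookup b v) * x * y)"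
  proof (cases "Poly_Mapping.lookup b v = 0")
    case False
    have "a + (b - ?e) = a + b - ?e"
      using False by (intro poly_mapping_eqI) (auto simp: lookup_minus lookup_add lookup_single when_def)
    then show ?thesis by (simp add: ac_simps)
  qed simp
  have "pdiff v (Poly_Mapping.single a x) * Poly_Mapping.single b y + Poly_Mapping.single a x * pdiff v (Poly_Mapping.single b y)
     = Poly_Mapping.single (a - ?e + b) (of_nat (Poly_Mapping.lookup a v) * x * y) + Poly_Mapping.single (a + (b - ?e)) (x * (of_nat (Poly_Mapping.lookup b v) * y))"
    by (simp add: pdiff_single mult_single)
  also have "\<dots> = Poly_Mapping.single (a + b - ?e) (of_nat (Poly_Mapping.lookup a v) * x * y) + Poly_Mapping.single (a + b - ?e) (of_nat (Poly_Mapping.lookup b v) * x * y)"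
    by (simp only: 1 2)
  also have "\<dots> = Poly_Mapping.single (a + b - ?e) ((of_nat (Poly_Mapping.lookup a v) + of_nat (Poly_Mapping.lookup b v)) * (x * y))"
    by (subst single_add[symmetric]) (simp add: algebra_simps)
  also have "\<dots> = pdiff v (Poly_Mapping.single a (x::rat) * Poly_Mapping.single b y)"
    by (simp add: pdiff_single mult_single lookup_add)
  finally show ?thesis by simp
qed

lemma pdiff_mult: "pdiff v (p * q) = pdiff v p * q + p * pdiff v (q::qpoly)"
proof -
  let ?s = "\<lambda>(r::qpoly) m. Poly_Mapping.single m (Poly_Mapping.lookup r m)"
  let ?A = "Poly_Mapping.keys p" and ?B = "Poly_Mapping.keys q"
  have "p * q = (\<Sum>a\<in>?A. \<Sum>b\<in>?B. ?s p a * ?s q b)"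
    by (subst poly_expand[of p], subst poly_expand[of q]) (simp add: sum_product)
  hence "pdiff v (p * q) = (\<Sum>a\<in>?A. \<Sum>b\<in>?B. pdiff v (?s p a) * ?s q b + ?s p a * pdiff v (?s q b))"
    by (simp add: pdiff_sum pdiff_mono_mult)
  also have "\<dots> = (\<Sum>a\<in>?A. pdiff v (?s p a)) * (\<Sum>b\<in>?B. ?s q b) + (\<Sum>a\<in>?A. ?s p a) * (\<Sum>b\<in>?B. pdiff v (?s q b))"
    by (simp add: sum_product sum.distrib)
  also have "\<dots> = pdiff v p * q + p * pdiff v q"
  proof -
    have hp: "pdiff v p = (\<Sum>a\<in>?A. pdiff v (?s p a))"
      using pdiff_sum[of v "?s p" ?A] poly_expand[of p] by simp
    have hq: "pdiff v q = (\<Sum>a\<in>?B. pdiff v (?s q a))"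
      using pdiff_sum[of v "?s q" ?B] poly_expand[of q] by simp
    show ?thesis by (simp add: hp hq flip: poly_expand)
  qed
  finally show ?thesis .
qed

lemma qconst_mult: "qconst (a * b) = qconst a * qconst b"
  by (simp add: qconst_def mult_single)
lemma qconst_add: "qconst (a + b) = qconst a + qconst b"
  by (simp add: qconst_def single_add)
lemma qconst_minus: "qconst (- a) = - qconst a"
  by (simp add: qconst_def single_uminus)
lemma qconst_0[simp]: "qconst 0 = 0" by (simp add: qconst_def)
lemma qconst_1[simp]: "qconst 1 = 1" by (simp add: qconst_def)
lemma qconst_of_nat: "of_nat n = qconst (of_nat n)" by (simp add: qconst_def)
lemma qconst_power: "qconst (a ^ n) = qconst a ^ n"
  by (induction n) (simp_all add: qconst_mult)

lemma pdiff_qconst[simp]: "pdiff v (qconst r) = 0"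
  by (simp add: qconst_def pdiff_single)

lemma pdiff_qconst_mult: "pdiff v (qconst r * p) = qconst r * pdiff v p"
  by (simp add: pdiff_mult)

lemma pdiff_minus: "pdiff v (- p) = - pdiff v p"
proof -
  have "pdiff v p + pdiff v (-p) = 0" using pdiff_add[of v p "-p"] by simp
  thus ?thesis by (metis neg_eq_iff_add_eq_0)
qed

lemma pdiff_qvar: "pdiff v (qvar w) = (if w = v then 1 else 0)"
  by (auto simp: qvar_def pdiff_single lookup_single)

lemma pdiff_zeta: "odd k \<Longrightarrow> 3 \<le> k \<Longrightarrow> pdiff k (zeta_a w) = (if w = k then 1 else 0)"
  by (auto simp: zeta_a_def pdiff_qvar)

abbreviation Q :: "rat \<Rightarrow> qpoly fps" where "Q r \<equiv> fps_const (qconst r)"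

lemma Q_mult: "Q (a * b) = Q a * Q b" by (simp add: qconst_mult)
lemma Q_add: "Q (a + b) = Q a + Q b" by (simp add: qconst_add)
lemma Q_minus: "Q (- a) = - Q a" by (simp add: qconst_minus)
lemma Q_of_nat: "(of_nat n :: qpoly fps) = Q (of_nat n)"
  by (simp flip: qconst_of_nat fps_of_nat)
lemma Q_power: "Q (a ^ n) = Q a ^ n" by (simp add: qconst_power fps_const_power)
lemma Q_neg1_power: "(-1 :: qpoly fps) ^ n = Q ((-1) ^ n)"
  by (simp add: Q_power Q_minus)

lemma delta_add: "delta k (f + g) = delta k f + delta k g"
  by (simp add: delta_def pdiff_add fps_ext)
lemma delta_zero[simp]: "delta k 0 = 0"
  by (simp add: delta_def fps_ext)
lemma delta_minus: "delta k (- f) = - delta k f"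
  by (simp add: delta_def pdiff_minus fps_ext)
lemma delta_diff: "delta k (f - g) = delta k f - delta k g"
  using delta_add[of k f "- g"] by (simp add: delta_minus)
lemma delta_sum: "delta k (sum f A) = (\<Sum>a\<in>A. delta k (f a))"
  by (induction A rule: infinite_finite_induct) (auto simp: delta_add)
lemma delta_mult: "delta k (f * g) = delta k f * g + f * delta k g"
  by (simp add: delta_def fps_ext fps_mult_nth pdiff_sum pdiff_mult sum.distrib)
lemma delta_Q[simp]: "delta k (Q r) = 0"
  by (simp add: delta_def fps_ext)
lemma delta_one[simp]: "delta k 1 = 0"
  using delta_Q[of k 1] by simp
lemma delta_X_power[simp]: "delta k (fps_X ^ p) = 0"
  by (simp add: delta_def fps_ext flip: qconst_1)
lemma delta_Q_mult: "delta k (Q r * f) = Q r * delta k f"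
  by (simp add: delta_mult)
lemma delta_X_mult: "delta k (fps_X ^ p * f) = fps_X ^ p * delta k f"
  by (simp add: delta_mult)

lemma delta_Hpow:
  assumes k: "odd k" "3 \<le> k" and i: "1 \<le> i"
  shows "delta k (Hpow i) = (if i < k then Q ((-1) ^ i * of_nat ((k - 1) choose (i - 1))) * fps_X ^ (k - i) else 0)"
proof (rule fps_ext)
  fix j
  have h: "fps_nth (Hpow i) j = (if j = 0 then 0 else qconst ((-1) ^ i * of_nat ((i + j - 1) choose (i - 1))) * zeta_a (i + j))"
    by (simp add: Hpow_def qconst_mult qconst_power qconst_minus flip: qconst_of_nat)
  show "fps_nth (delta k (Hpow i)) j = fps_nth (if i < k then Q ((-1) ^ i * of_nat ((k - 1) choose (i - 1))) * fps_X ^ (k - i) else 0) j"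
    using k i
    by (auto simp: delta_def h pdiff_qconst_mult pdiff_zeta fps_X_power_mult_right_nth)
qed

declare Helem.simps[simp del]

lemma Helem_0[simp]: "Helem 0 = 1"
  by (simp add: Helem.simps)

lemma Helem_rec: "of_nat n * Helem n = (\<Sum>i = 1..n. (-1) ^ (i - 1) * Hpow i * Helem (n - i))"
proof (cases "n = 0")
  case False
  have "of_nat n * Helem n = (Q (of_nat n) * Q (1 / of_nat n)) * (\<Sum>i = 1..n. (-1) ^ (i - 1) * Hpow i * Helem (n - i))"
    using False by (subst Helem.simps) (simp add: Q_of_nat mult.assoc)
  also have "Q (of_nat n) * Q (1 / of_nat n) = Q (of_nat n * (1 / of_nat n))"
    by (simp only: Q_mult)
  also have "\<dots> = 1" using False by simp
  finally show ?thesis by simp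
qed simp

lemma binom_id: "0 < k \<Longrightarrow> j < k \<Longrightarrow> (of_nat ((k - 1) choose j) :: rat) = of_nat (k - j) * of_nat (k choose j) / of_nat k"
proof -
  assume "0 < k" "j < k"
  have "(k - j) * (k choose j) = k * ((k - 1) choose j)" by (rule binomial_absorb_comp)
  hence "(of_nat (k - j) * of_nat (k choose j) :: rat) = of_nat k * of_nat ((k - 1) choose j)"
    by (metis of_nat_mult)
  thus ?thesis using \<open>0 < k\<close> by (simp add: field_simps)
qed

definition Gk :: "nat \<Rightarrow> nat \<Rightarrow> qpoly fps" where
  "Gk k a = (if k \<le> a then Helem (a - k) else 0)"

lemma newton_shift:
  assumes "j < k"
  shows "(\<Sum>i=1..n. (-1)^(i-1) * Hpow i * Gk k (n - i + j)) = of_nat (n + j - k) * Gk k (n + j)"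
proof (cases "n + j < k")
  case True
  then show ?thesis by (auto simp: Gk_def intro!: sum.neutral)
next
  case False
  define m where "m = n + j - k"
  have mn: "m < n" using assms False by (simp add: m_def)
  have "(\<Sum>i=1..n. (-1)^(i-1) * Hpow i * Gk k (n - i + j)) = (\<Sum>i=1..m. (-1)^(i-1) * Hpow i * Gk k (n - i + j))"
    using mn False by (intro sum.mono_neutral_right) (auto simp: Gk_def m_def)
  also have "\<dots> = (\<Sum>i=1..m. (-1)^(i-1) * Hpow i * Helem (m - i))"
    using mn False by (intro sum.cong) (auto simp: Gk_def m_def add.commute)
  also have "\<dots> = of_nat m * Helem m" by (simp add: Helem_rec)
  finally show ?thesis using False by (simp add: Gk_def m_def)
qed

lemma neg1_pow_pred: "1 \<le> i \<Longrightarrow> ((-1::rat) ^ (i - 1)) * (-1) ^ i = -1"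
  by (cases i) auto

lemma reindex_k: "(\<Sum>j=1..k-1. F j) = (\<Sum>i=1..k-1. F (k - i :: nat))"
  by (rule sum.reindex_bij_witness[of _ "\<lambda>j. k - j" "\<lambda>j. k - j"]) auto

lemma SA_lemma:
  assumes k: "odd k" "3 \<le> k"
  shows "(\<Sum>i=1..n. Q ((-1)^(i-1)) * delta k (Hpow i) * Helem (n - i))
       = - (\<Sum>j=1..k-1. Q (of_nat ((k-1) choose j)) * fps_X ^ j * Gk k (n + j))"
proof -
  let ?T = "\<lambda>i. Q (of_nat ((k-1) choose (i-1))) * fps_X ^ (k - i) * Helem (n - i)"
  have "(\<Sum>i=1..n. Q ((-1)^(i-1)) * delta k (Hpow i) * Helem (n - i))
      = (\<Sum>i=1..n. - (if i < k then ?T i else 0))"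
  proof (intro sum.cong refl)
    fix i assume i: "i \<in> {1..n}"
    have qq: "Q ((-1)^(i-1)) * Q ((-1) ^ i * of_nat ((k - 1) choose (i - 1))) = - Q (of_nat ((k - 1) choose (i - 1)))"
    proof -
      have r: "(-1::rat)^(i-1) * ((-1) ^ i * of_nat ((k - 1) choose (i - 1))) = - of_nat ((k - 1) choose (i - 1))"
        using neg1_pow_pred[of i] i by (simp add: mult.assoc[symmetric])
      show ?thesis by (simp only: Q_mult[symmetric] r Q_minus)
    qed
    show "Q ((-1)^(i-1)) * delta k (Hpow i) * Helem (n - i) = - (if i < k then ?T i else 0)"
    proof (cases "i < k")
      case True
      have "Q ((-1)^(i-1)) * delta k (Hpow i) * Helem (n - i) = (Q ((-1)^(i-1)) * Q ((-1) ^ i * of_nat ((k - 1) choose (i - 1)))) * fps_X ^ (k - i) * Helem (n - i)"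
      proof -
        have d: "delta k (Hpow i) = Q ((-1) ^ i * of_nat ((k - 1) choose (i - 1))) * fps_X ^ (k - i)"
          using delta_Hpow[OF k(1) k(2), of i] i True by simp
        show ?thesis by (simp only: d mult.assoc)
      qed
      also have "\<dots> = - ?T i" by (simp only: qq minus_mult_left)
      finally show ?thesis using True by simp
    next
      case False
      then show ?thesis using i k by (simp add: delta_Hpow)
    qed
  qed
  also have "\<dots> = - (\<Sum>i=1..min n (k-1). ?T i)"
    by (simp add: sum_negf, intro sum.mono_neutral_cong_right) auto
  finally have e1: "(\<Sum>i=1..n. Q ((-1)^(i-1)) * delta k (Hpow i) * Helem (n - i)) = - (\<Sum>i=1..min n (k-1). ?T i)" .
  have "(\<Sum>j=1..k-1. Q (of_nat ((k-1) choose j)) * fps_X ^ j * Gk k (n + j))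
      = (\<Sum>i=1..k-1. Q (of_nat ((k-1) choose (k - i))) * fps_X ^ (k - i) * Gk k (n + (k - i)))"
    by (rule reindex_k)
  also have "\<dots> = (\<Sum>i=1..k-1. if i \<le> n then ?T i else 0)"
  proof (intro sum.cong refl)
    fix i assume i: "i \<in> {1..k-1}"
    have "(k - 1) choose (k - i) = (k - 1) choose (i - 1)"
      using i binomial_symmetric[of "i - 1" "k - 1"] by auto
    then show "Q (of_nat ((k-1) choose (k - i))) * fps_X ^ (k - i) * Gk k (n + (k - i)) = (if i \<le> n then ?T i else 0)"
      using i by (auto simp: Gk_def)
  qed
  also have "\<dots> = (\<Sum>i=1..min n (k-1). ?T i)"
    by (intro sum.mono_neutral_cong_right) auto
  finally show ?thesis using e1 by simp
qed

lemma cancel_n: "0 < n \<Longrightarrow> of_nat n * a = of_nat n * (b :: qpoly fps) \<Longrightarrow> a = b"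
proof -
  assume n: "0 < n" and e: "of_nat n * a = of_nat n * b"
  have one: "Q (1 / of_nat n) * of_nat n = 1"
  proof -
    have "Q (1 / of_nat n) * of_nat n = Q (1 / of_nat n * of_nat n)" by (simp only: Q_of_nat Q_mult)
    also have "\<dots> = 1" using n by simp
    finally show ?thesis .
  qed
  have "Q (1 / of_nat n) * (of_nat n * a) = Q (1 / of_nat n) * (of_nat n * b)" using e by simp
  thus ?thesis by (simp only: mult.assoc[symmetric] one mult_1_left)
qed

lemma main_full:
  assumes k: "odd k" "3 \<le> k"
  shows "delta k (Helem n) = - (\<Sum>j=1..k-1. Q (1 / of_nat k * of_nat (k choose j)) * fps_X ^ j * Gk k (n + j))"
proof (induction n rule: less_induct)
  case (less n)
  let ?c = "\<lambda>j. Q (1 / of_nat k * of_nat (k choose j))"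
  show ?case
  proof (cases "n = 0")
    case True
    then show ?thesis by (auto simp: Gk_def intro!: sum.neutral)
  next
    case False
    have IH: "delta k (Helem (n - i)) = - (\<Sum>j=1..k-1. ?c j * fps_X ^ j * Gk k (n - i + j))" if "i \<in> {1..n}" for i
      using less.IH[of "n - i"] that by simp
    have step1: "of_nat n * delta k (Helem n)
       = (\<Sum>i=1..n. Q ((-1)^(i-1)) * delta k (Hpow i) * Helem (n - i))
       + (\<Sum>i=1..n. Q ((-1)^(i-1)) * Hpow i * delta k (Helem (n - i)))"
    proof -
      have "of_nat n * delta k (Helem n) = delta k (of_nat n * Helem n)"
        by (simp only: Q_of_nat delta_Q_mult)
      also have "\<dots> = delta k (\<Sum>i=1..n. Q ((-1)^(i-1)) * Hpow i * Helem (n - i))"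
        by (simp only: Helem_rec Q_neg1_power)
      also have "\<dots> = (\<Sum>i=1..n. Q ((-1)^(i-1)) * delta k (Hpow i) * Helem (n - i) + Q ((-1)^(i-1)) * Hpow i * delta k (Helem (n - i)))"
        by (simp add: delta_sum delta_mult mult.assoc distrib_left)
      finally show ?thesis by (simp add: sum.distrib)
    qed
    have SB: "(\<Sum>i=1..n. Q ((-1)^(i-1)) * Hpow i * delta k (Helem (n - i)))
        = - (\<Sum>j=1..k-1. ?c j * fps_X ^ j * (of_nat (n + j - k) * Gk k (n + j)))"
    proof -
      have "(\<Sum>i=1..n. Q ((-1)^(i-1)) * Hpow i * delta k (Helem (n - i)))
          = (\<Sum>i=1..n. - (\<Sum>j=1..k-1. ?c j * fps_X ^ j * (Q ((-1)^(i-1)) * Hpow i * Gk k (n - i + j))))"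
        by (intro sum.cong refl) (simp add: IH sum_distrib_left sum_negf algebra_simps)
      also have "\<dots> = - (\<Sum>j=1..k-1. ?c j * fps_X ^ j * (\<Sum>i=1..n. (-1)^(i-1) * Hpow i * Gk k (n - i + j)))"
        by (simp add: sum_negf sum_distrib_left Q_neg1_power) (rule sum.swap)
      also have "\<dots> = - (\<Sum>j=1..k-1. ?c j * fps_X ^ j * (of_nat (n + j - k) * Gk k (n + j)))"
      proof (intro arg_cong[where f = uminus] sum.cong refl)
        fix j assume "j \<in> {1..k-1}"
        hence "j < k" using k by auto
        show "?c j * fps_X ^ j * (\<Sum>i=1..n. (-1)^(i-1) * Hpow i * Gk k (n - i + j)) = ?c j * fps_X ^ j * (of_nat (n + j - k) * Gk k (n + j))"
          by (simp only: newton_shift[OF \<open>j < k\<close>])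
      qed
      finally show ?thesis .
    qed
    have comb: "of_nat n * delta k (Helem n) = of_nat n * - (\<Sum>j=1..k-1. ?c j * fps_X ^ j * Gk k (n + j))"
    proof -
      have "of_nat n * delta k (Helem n) = - (\<Sum>j=1..k-1. (Q (of_nat ((k-1) choose j)) + ?c j * of_nat (n + j - k)) * fps_X ^ j * Gk k (n + j))"
      proof -
        have "of_nat n * delta k (Helem n) = - (\<Sum>j=1..k-1. Q (of_nat ((k-1) choose j)) * fps_X ^ j * Gk k (n + j)) + - (\<Sum>j=1..k-1. ?c j * fps_X ^ j * (of_nat (n + j - k) * Gk k (n + j)))"
          by (simp only: step1 SA_lemma[OF k] SB)
        also have "\<dots> = - (\<Sum>j=1..k-1. Q (of_nat ((k-1) choose j)) * fps_X ^ j * Gk k (n + j) + ?c j * fps_X ^ j * (of_nat (n + j - k) * Gk k (n + j)))"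
          by (simp only: minus_add_distrib[symmetric] sum.distrib[symmetric])
        also have "\<dots> = - (\<Sum>j=1..k-1. (Q (of_nat ((k-1) choose j)) + ?c j * of_nat (n + j - k)) * fps_X ^ j * Gk k (n + j))"
          by (intro arg_cong[where f = uminus] sum.cong refl) (simp add: algebra_simps)
        finally show ?thesis .
      qed
      also have "\<dots> = - (\<Sum>j=1..k-1. of_nat n * (?c j * fps_X ^ j * Gk k (n + j)))"
      proof (intro arg_cong[where f = uminus] sum.cong refl)
        fix j assume j: "j \<in> {1..k-1}"
        show "(Q (of_nat ((k-1) choose j)) + ?c j * of_nat (n + j - k)) * fps_X ^ j * Gk k (n + j) = of_nat n * (?c j * fps_X ^ j * Gk k (n + j))"
        proof (cases "k \<le> n + j")
          case True
          have r: "(of_nat ((k-1) choose j) :: rat) + 1 / of_nat k * of_nat (k choose j) * of_nat (n + j - k) = of_nat n * (1 / of_nat k * of_nat (k choose j))"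
          proof -
            have jk: "j < k" using j k by auto
            have "0 < k" using k by auto
            then show ?thesis using binom_id[OF _ jk] True less_imp_le[OF jk] by (simp add: field_simps of_nat_diff)
          qed
          have "Q (of_nat ((k-1) choose j)) + ?c j * of_nat (n + j - k) = of_nat n * ?c j"
            by (simp only: Q_of_nat Q_mult[symmetric] Q_add[symmetric] r)
          then show ?thesis by (simp add: mult.assoc)
        qed (simp add: Gk_def)
      qed
      finally show ?thesis by (simp add: sum_distrib_left)
    qed
    show ?thesis using cancel_n[OF _ comb] False by simp
  qed
qed

theorem mainTheorem6:
  fixes n k :: nat
  assumes "odd k" and "k \<ge> 3"
  shows "delta k (Helem n) =
    - (\<Sum>i = max 1 (k - n)..k - 1.
         fps_const (qconst (1 / of_nat k) * of_nat (k choose i)) * fps_X ^ i * Helem (n + i - k))"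
proof -
  have "(\<Sum>j=1..k-1. Q (1 / of_nat k * of_nat (k choose j)) * fps_X ^ j * Gk k (n + j))
     = (\<Sum>i = max 1 (k - n)..k - 1. fps_const (qconst (1 / of_nat k) * of_nat (k choose i)) * fps_X ^ i * Helem (n + i - k))"
  proof (intro sum.mono_neutral_cong_right)
    fix i
    have e: "fps_const (qconst (1 / of_nat k) * of_nat (k choose i)) = Q (1 / of_nat k * of_nat (k choose i))"
      by (subst qconst_of_nat) (simp only: qconst_mult)
    show "i \<in> {max 1 (k - n)..k - 1} \<Longrightarrow> Q (1 / of_nat k * of_nat (k choose i)) * fps_X ^ i * Gk k (n + i) = fps_const (qconst (1 / of_nat k) * of_nat (k choose i)) * fps_X ^ i * Helem (n + i - k)"
      by (simp only: e) (auto simp: Gk_def)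
  qed (auto simp: Gk_def)
  then show ?thesis using main_full[OF assms] by simp
qed

end
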